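(* Consider the mixed CAC game (defined in the context) with $\mathcal V_c\neq\emptyset$ and $\mathcal V_a\neq\emptyset$. (1) If $x^*\in\mathcal X$ is a Nash equilibrium, then, writing $z^*=z(x^* )$, $z_c^*=z_c(x^* )$, $z_a^*=z_a(x^* )$, the following hold for every $\epsilon_c\in(0,\tfrac1n]$ and every $\epsilon_a\in(\tfrac1n,\tfrac2n]$: $$ \begin{cases} z_c^*=F_c\!\left(\frac{n}{n-1}(z^*-\epsilon_c)\right),\\[2pt] G_a\!\left(\frac{n}{n-1}(z^*-\epsilon_a)\right)\ \ge\ z_a^*\ \ge\ G_a\!\left(\frac{n}{n-1}z^*\right),\\[2pt] z^*=\alpha z_c^*+(1-\alpha)z_a^*. \end{cases} $$ (2) Conversely, if $z^*\in\{0,\tfrac1n,\dots,1\}$, $z_c^*\in\{0,\tfrac1{n_c},\dots,1\}$ and $z_a^*\in\{0,\tfrac1{n_a},\dots,1\}$ satisfy the three conditions above for every $\epsilon_c\in(0,\tfrac1n]$ and every $\epsilon_a\in(\tfrac1n,\tfrac2n]$, then there exists a Nash equilibrium $x^*\in\mathcal X$ with $z(x^* )=z^*$, $z_c(x^* )=z_c^*$ and $z_a(x^* )=z_a^*$.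
   Context: Let $\mathcal V$ be a finite set of $n\ge 2$ agents, partitioned into disjoint sets $\mathcal V_c$ (coordinating agents) and $\mathcal V_a$ (anti-coordinating agents), $\mathcal V=\mathcal V_c\cup\mathcal V_a$. Set $\delta_i=+1$ if $i\in\mathcal V_c$ and $\delta_i=-1$ if $i\in\mathcal V_a$. Given real weights $d_i$ ($i\in\mathcal V$), the mixed coordination/anti-coordination (CAC) game has action set $\{-1,+1\}$ for every agent, configuration space $\mathcal X=\{-1,+1\}^{\mathcal V}$, and utilities $u_i(x)=\delta_i\big(\sum_{j\neq i}x_ix_j-d_ix_i\big)$. A (pure) Nash equilibrium is an $x\in\mathcal X$ such that $u_i(x)\ge u_i(y_i,x_{-i})$ for every $i\in\mathcal V$ and $y_i\in\{-1,+1\}$. The threshold of agent $i$ is $r_i=\tfrac12+\tfrac{d_i}{2(n-1)}$. Let $n_c=|\mathcal V_c|$, $n_a=|\mathcal V_a|$, $\alpha=n_c/n$. For $x\in\mathcal X$ let $z(x)=\frac1n|\{i\in\mathcal V: x_i=+1\}|$, $z_c(x)=\frac1{n_c}|\{i\in\mathcal V_c: x_i=+1\}|$, $z_a(x)=\frac1{n_a}|\{i\in\mathcal V_a: x_i=+1\}|$. Define $F_c(t)=\frac1{n_c}|\{i\in\mathcal V_c: r_i\le t\}|$ (threshold CDF of coordinating agents) and $G_a(t)=\frac1{n_a}|\{i\in\mathcal V_a: r_i> t\}|$ (threshold complementary CDF of anti-coordinating agents), for $t\in\mathbb R$. *)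

theory Defs
  imports Main "HOL-Library.FuncSet" Complex_Main
begin

definition cac_config :: "'a set \<Rightarrow> ('a \<Rightarrow> real) set" where
  "cac_config V = V \<rightarrow>\<^sub>E {-1, 1}"

definition cac_delta :: "'a set \<Rightarrow> 'a \<Rightarrow> real" where
  "cac_delta Vc i = (if i \<in> Vc then 1 else -1)"

definition cac_utility ::
  "'a set \<Rightarrow> 'a set \<Rightarrow> ('a \<Rightarrow> real) \<Rightarrow> 'a \<Rightarrow> ('a \<Rightarrow> real) \<Rightarrow> real" where
  "cac_utility V Vc d i x =
     cac_delta Vc i * ((\<Sum>j\<in>V - {i}. x i * x j) - d i * x i)"

definition cac_nash ::
  "'a set \<Rightarrow> 'a set \<Rightarrow> ('a \<Rightarrow> real) \<Rightarrow> ('a \<Rightarrow> real) \<Rightarrow> bool" where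
  "cac_nash V Vc d x \<longleftrightarrow> x \<in> cac_config V \<and>
     (\<forall>i\<in>V. \<forall>y\<in>{-1, 1::real}.
        cac_utility V Vc d i x \<ge> cac_utility V Vc d i (x(i := y)))"

definition cac_threshold :: "'a set \<Rightarrow> ('a \<Rightarrow> real) \<Rightarrow> 'a \<Rightarrow> real" where
  "cac_threshold V d i = 1/2 + d i / (2 * (real (card V) - 1))"

definition frac_plus :: "'a set \<Rightarrow> ('a \<Rightarrow> real) \<Rightarrow> real" where
  "frac_plus S x = real (card {i\<in>S. x i = 1}) / real (card S)"

definition F_c :: "'a set \<Rightarrow> 'a set \<Rightarrow> ('a \<Rightarrow> real) \<Rightarrow> real \<Rightarrow> real" where
  "F_c V Vc d t = real (card {i\<in>Vc. cac_threshold V d i \<le> t}) / real (card Vc)"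

definition G_a :: "'a set \<Rightarrow> 'a set \<Rightarrow> ('a \<Rightarrow> real) \<Rightarrow> real \<Rightarrow> real" where
  "G_a V Va d t = real (card {i\<in>Va. cac_threshold V d i > t}) / real (card Va)"

definition cac_conditions ::
  "'a set \<Rightarrow> 'a set \<Rightarrow> 'a set \<Rightarrow> ('a \<Rightarrow> real) \<Rightarrow> real \<Rightarrow> real \<Rightarrow> real \<Rightarrow> bool" where
  "cac_conditions V Vc Va d z zc za \<longleftrightarrow>
     (let n = real (card V) in
      (\<forall>ec. 0 < ec \<and> ec \<le> 1/n \<longrightarrow> zc = F_c V Vc d (n/(n-1) * (z - ec))) \<and>
      (\<forall>ea. 1/n < ea \<and> ea \<le> 2/n \<longrightarrow>
          G_a V Va d (n/(n-1) * (z - ea)) \<ge> za \<and> za \<ge> G_a V Va d (n/(n-1) * z)) \<and>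
      z = (real (card Vc) / n) * zc + (1 - real (card Vc) / n) * za)"

end

theory Submission
  imports Defs
begin
lemma sum_pm1:
  assumes "finite W" "\<forall>j\<in>W. x j \<in> {-1, 1::real}"
  shows "(\<Sum>j\<in>W. x j) = 2 * real (card {j\<in>W. x j = 1}) - real (card W)"
proof -
  define P where "P = {j\<in>W. x j = 1}"
  have fP: "finite P" "P \<subseteq> W" using assms(1) unfolding P_def by auto
  have e1: "W \<inter> {j. j \<in> P} = P" using fP by auto
  have e2: "W \<inter> - {j. j \<in> P} = W - P" by auto
  have "(\<Sum>j\<in>W. x j) = (\<Sum>j\<in>W. if j \<in> P then 1 else -1)"
    using assms(2) unfolding P_def by (intro sum.cong) auto
  also have "\<dots> = (\<Sum>j\<in>W \<inter> {j. j \<in> P}. 1) + (\<Sum>j\<in>W \<inter> - {j. j \<in> P}. -1)"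
    by (rule sum.If_cases[OF assms(1)])
  also have "\<dots> = (\<Sum>j\<in>P. 1) + (\<Sum>j\<in>W - P. -1)"
    using e1 e2 by (simp only:)
  also have "\<dots> = real (card P) - real (card (W - P))" by simp
  also have "card (W - P) = card W - card P" using fP by (simp add: card_Diff_subset)
  also have "real (card W - card P) = real (card W) - real (card P)"
    using fP assms(1) by (simp add: card_mono of_nat_diff)
  finally show ?thesis unfolding P_def by simp
qed
lemma util_upd:
  assumes "i \<in> V"
  shows "cac_utility V Vc d i (x(i:=y)) = cac_delta Vc i * y * ((\<Sum>j\<in>V-{i}. x j) - d i)"
proof -
  have "(\<Sum>j\<in>V-{i}. (x(i:=y)) i * (x(i:=y)) j) = (\<Sum>j\<in>V-{i}. y * x j)"
    by (intro sum.cong) auto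
  thus ?thesis unfolding cac_utility_def by (simp add: sum_distrib_left algebra_simps)
qed

lemma util_self:
  assumes "i \<in> V"
  shows "cac_utility V Vc d i x = cac_delta Vc i * x i * ((\<Sum>j\<in>V-{i}. x j) - d i)"
  using util_upd[OF assms, of Vc d x "x i"] by simp

lemma aux:
  fixes xi c A :: real
  assumes "xi = 1 \<or> xi = -1"
  shows "(\<forall>y\<in>{-1, 1::real}. c * xi * A \<ge> c * y * A) \<longleftrightarrow> c * xi * A \<ge> 0"
  using assms by (cases "xi = 1") auto

lemma nash_char:
  assumes fin: "finite V" and n2: "card V \<ge> 2" and xc: "x \<in> cac_config V"
  shows "cac_nash V Vc d x \<longleftrightarrow> (\<forall>i\<in>V.
     (i\<in>Vc \<and> x i = 1 \<longrightarrow> (real (card V) - 1) * cac_threshold V d i \<le> real (card {j\<in>V. x j = 1}) - 1) \<and>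
     (i\<in>Vc \<and> x i = -1 \<longrightarrow> real (card {j\<in>V. x j = 1}) \<le> (real (card V) - 1) * cac_threshold V d i) \<and>
     (i\<notin>Vc \<and> x i = 1 \<longrightarrow> real (card {j\<in>V. x j = 1}) - 1 \<le> (real (card V) - 1) * cac_threshold V d i) \<and>
     (i\<notin>Vc \<and> x i = -1 \<longrightarrow> (real (card V) - 1) * cac_threshold V d i \<le> real (card {j\<in>V. x j = 1})))"
    (is "_ \<longleftrightarrow> (\<forall>i\<in>V. ?C i)")
proof -
  define N where "N = real (card V)"
  define m where "m = real (card {j\<in>V. x j = 1})"
  have xv: "\<forall>j\<in>V. x j \<in> {-1,1}" using xc unfolding cac_config_def by auto
  have N2: "N \<ge> 2" using n2 unfolding N_def by simp
  have loc: "(\<forall>y\<in>{-1, 1::real}. cac_utility V Vc d i x \<ge> cac_utility V Vc d i (x(i := y)))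
        \<longleftrightarrow> ?C i" if iV: "i \<in> V" for i
  proof -
    define S where "S = (\<Sum>j\<in>V-{i}. x j)"
    have S: "S = 2 * real (card {j\<in>V-{i}. x j = 1}) - real (card (V - {i}))"
      unfolding S_def using fin xv by (intro sum_pm1) auto
    have c0: "card V \<ge> 1" using n2 by simp
    have cV: "real (card (V - {i})) = N - 1" using fin iV c0 unfolding N_def by (simp add: of_nat_diff)
    have cm: "real (card {j\<in>V-{i}. x j = 1}) = m - (if x i = 1 then 1 else 0)"
    proof (cases "x i = 1")
      case True
      define A where "A = {j\<in>V. x j = 1}"
      have eq: "{j\<in>V-{i}. x j = 1} = A - {i}" unfolding A_def by auto
      have iA: "i \<in> A" using True iV unfolding A_def by auto
      have finA: "finite A" using fin unfolding A_def by auto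
      have c1: "card A \<ge> 1" using iA finA by (metis One_nat_def Suc_leI card_gt_0_iff empty_iff)
      have "card (A - {i}) = card A - 1" using card_Diff_singleton[OF iA] .
      then have "real (card (A - {i})) = real (card A) - 1" using c1 by (simp add: of_nat_diff)
      then show ?thesis unfolding eq m_def A_def[symmetric] using True by simp
    next
      case False
      have "{j\<in>V-{i}. x j = 1} = {j\<in>V. x j = 1}" using False by auto
      then show ?thesis using False unfolding m_def by simp
    qed
    have thr: "(N - 1) * cac_threshold V d i = (N - 1)/2 + d i / 2"
      unfolding cac_threshold_def N_def[symmetric] using N2 by (simp add: field_simps)
    have key: "S - d i = 2 * ((m - (if x i = 1 then 1 else 0)) - (N - 1) * cac_threshold V d i)"
    proof -
      have dd: "d i = 2 * ((N - 1) * cac_threshold V d i) - (N - 1)"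
        unfolding cac_threshold_def N_def[symmetric] using N2 by (simp add: field_simps)
      show ?thesis unfolding dd using S cV cm by (cases "x i = 1") (simp_all add: algebra_simps)
    qed
    have xi: "x i = 1 \<or> x i = -1" using xv iV by auto
    have "(\<forall>y\<in>{-1, 1::real}. cac_utility V Vc d i x \<ge> cac_utility V Vc d i (x(i := y)))
        \<longleftrightarrow> cac_delta Vc i * x i * (S - d i) \<ge> 0"
      unfolding util_self[OF iV, of Vc d x] util_upd[OF iV, of Vc d x] S_def[symmetric]
      by (rule aux[OF xi])
    also have "\<dots> \<longleftrightarrow> ?C i"
    proof (cases "i \<in> Vc")
      case True
      then show ?thesis using xi key unfolding cac_delta_def m_def N_def by (cases "x i = 1") auto
    next
      case False
      then show ?thesis using xi key unfolding cac_delta_def m_def N_def by (cases "x i = 1") auto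
    qed
    finally show ?thesis .
  qed
  have "cac_nash V Vc d x \<longleftrightarrow> (\<forall>i\<in>V. \<forall>y\<in>{-1, 1::real}. cac_utility V Vc d i x \<ge> cac_utility V Vc d i (x(i := y)))"
    unfolding cac_nash_def using xc by blast
  also have "\<dots> \<longleftrightarrow> (\<forall>i\<in>V. ?C i)"
    using loc by (intro ball_cong) auto
  finally show ?thesis .
qed


lemma scale_eq:
  fixes N m e :: real
  assumes "N \<ge> 2"
  shows "(N - 1) * (N / (N - 1) * (m / N - e)) = m - N * e"
  using assms by (simp add: field_simps)

lemma le_scale:
  fixes N a b :: real
  assumes "N \<ge> 2"
  shows "a \<le> b \<longleftrightarrow> (N - 1) * a \<le> (N - 1) * b"
  using assms by simp

lemma lt_scale:
  fixes N a b :: real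
  assumes "N \<ge> 2"
  shows "a < b \<longleftrightarrow> (N - 1) * a < (N - 1) * b"
  using assms by simp

lemma part1:
  assumes fin: "finite V" and n2: "card V \<ge> 2"
    and dis: "Vc \<inter> Va = {}" and un: "Vc \<union> Va = V"
    and ne1: "Vc \<noteq> {}" and ne2: "Va \<noteq> {}"
    and nash: "cac_nash V Vc d x"
  shows "cac_conditions V Vc Va d (frac_plus V x) (frac_plus Vc x) (frac_plus Va x)"
proof -
  define N where "N = real (card V)"
  define P where "P = {j\<in>V. x j = 1}"
  define Pc where "Pc = {j\<in>Vc. x j = 1}"
  define Pa where "Pa = {j\<in>Va. x j = 1}"
  define m where "m = real (card P)"
  define r where "r = cac_threshold V d"
  have N2: "N \<ge> 2" using n2 unfolding N_def by simp
  have xc: "x \<in> cac_config V" using nash unfolding cac_nash_def by blast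
  have xv: "\<forall>j\<in>V. x j = 1 \<or> x j = -1" using xc unfolding cac_config_def by auto
  have C: "\<forall>i\<in>V.
     (i\<in>Vc \<and> x i = 1 \<longrightarrow> (N - 1) * r i \<le> m - 1) \<and>
     (i\<in>Vc \<and> x i = -1 \<longrightarrow> m \<le> (N - 1) * r i) \<and>
     (i\<notin>Vc \<and> x i = 1 \<longrightarrow> m - 1 \<le> (N - 1) * r i) \<and>
     (i\<notin>Vc \<and> x i = -1 \<longrightarrow> (N - 1) * r i \<le> m)"
    using nash_char[OF fin n2 xc, of Vc d] nash unfolding N_def m_def P_def r_def by blast
  have finc: "finite Vc" "finite Va" using fin un by auto
  have zV: "frac_plus V x = m / N" unfolding frac_plus_def m_def P_def N_def ..
  have zc: "frac_plus Vc x = real (card Pc) / real (card Vc)" unfolding frac_plus_def Pc_def ..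
  have za: "frac_plus Va x = real (card Pa) / real (card Va)" unfolding frac_plus_def Pa_def ..
  have c1: "\<forall>ec. 0 < ec \<and> ec \<le> 1/N \<longrightarrow> frac_plus Vc x = F_c V Vc d (N/(N-1) * (m/N - ec))"
  proof (intro allI impI)
    fix ec :: real assume ec: "0 < ec \<and> ec \<le> 1/N"
    define t where "t = N/(N-1) * (m/N - ec)"
    have tt: "(N - 1) * t = m - N * ec" unfolding t_def using scale_eq[OF N2] .
    have Nec: "0 < N * ec" "N * ec \<le> 1" using ec N2 by (auto simp: field_simps)
    have "{i\<in>Vc. r i \<le> t} = Pc"
    proof (intro set_eqI iffI)
      fix i assume "i \<in> {i\<in>Vc. r i \<le> t}"
      then have i: "i \<in> Vc" "(N - 1) * r i \<le> (N - 1) * t" using le_scale[OF N2] by auto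
      have "i \<in> V" using i un by auto
      show "i \<in> Pc"
      proof (rule ccontr)
        assume "i \<notin> Pc"
        then have "x i = -1" using xv \<open>i \<in> V\<close> i unfolding Pc_def by auto
        then have "m \<le> (N - 1) * r i" using C \<open>i \<in> V\<close> i by auto
        then show False using i tt Nec by linarith
      qed
    next
      fix i assume "i \<in> Pc"
      then have i: "i \<in> Vc" "x i = 1" unfolding Pc_def by auto
      have "i \<in> V" using i un by auto
      then have "(N - 1) * r i \<le> m - 1" using C i by auto
      then have "(N - 1) * r i \<le> (N - 1) * t" using tt Nec by linarith
      then show "i \<in> {i\<in>Vc. r i \<le> t}" using i le_scale[OF N2] by auto
    qed
    then show "frac_plus Vc x = F_c V Vc d t" unfolding zc F_c_def r_def by simp
  qed
  have c2: "\<forall>ea. 1/N < ea \<and> ea \<le> 2/N \<longrightarrow>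
          G_a V Va d (N/(N-1) * (m/N - ea)) \<ge> frac_plus Va x \<and> frac_plus Va x \<ge> G_a V Va d (N/(N-1) * (m/N))"
  proof (intro allI impI conjI)
    fix ea :: real assume ea: "1/N < ea \<and> ea \<le> 2/N"
    define t where "t = N/(N-1) * (m/N - ea)"
    have tt: "(N - 1) * t = m - N * ea" unfolding t_def using scale_eq[OF N2] .
    have Nea: "1 < N * ea" using ea N2 by (auto simp: field_simps)
    have "Pa \<subseteq> {i\<in>Va. r i > t}"
    proof
      fix i assume "i \<in> Pa"
      then have i: "i \<in> Va" "x i = 1" unfolding Pa_def by auto
      have "i \<in> V" "i \<notin> Vc" using i un dis by auto
      then have "m - 1 \<le> (N - 1) * r i" using C i by auto
      then have "(N - 1) * t < (N - 1) * r i" using tt Nea by linarith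
      then show "i \<in> {i\<in>Va. r i > t}" using i lt_scale[OF N2] by auto
    qed
    then have "card Pa \<le> card {i\<in>Va. r i > t}" using finc by (intro card_mono) auto
    then show "frac_plus Va x \<le> G_a V Va d t"
      unfolding za G_a_def r_def[symmetric] by (simp add: divide_right_mono)
  next
    define t where "t = N/(N-1) * (m/N)"
    have tt: "(N - 1) * t = m" unfolding t_def using scale_eq[OF N2, of m 0] by simp
    have "{i\<in>Va. r i > t} \<subseteq> Pa"
    proof
      fix i assume "i \<in> {i\<in>Va. r i > t}"
      then have i: "i \<in> Va" "(N - 1) * t < (N - 1) * r i" using lt_scale[OF N2] by auto
      have "i \<in> V" "i \<notin> Vc" using i un dis by auto
      show "i \<in> Pa"
      proof (rule ccontr)
        assume "i \<notin> Pa"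
        then have "x i = -1" using xv \<open>i \<in> V\<close> i unfolding Pa_def by auto
        then have "(N - 1) * r i \<le> m" using C \<open>i \<in> V\<close> \<open>i \<notin> Vc\<close> by auto
        then show False using i tt by linarith
      qed
    qed
    then have "card {i\<in>Va. r i > t} \<le> card Pa" using finc unfolding Pa_def by (intro card_mono) auto
    then show "G_a V Va d t \<le> frac_plus Va x"
      unfolding za G_a_def r_def[symmetric] by (simp add: divide_right_mono)
  qed
  have c3: "m / N = (real (card Vc) / N) * frac_plus Vc x + (1 - real (card Vc) / N) * frac_plus Va x"
  proof -
    have PU: "P = Pc \<union> Pa" "Pc \<inter> Pa = {}" unfolding P_def Pc_def Pa_def using un dis by auto
    have fP: "finite Pc" "finite Pa" unfolding Pc_def Pa_def using finc by auto
    have cP: "m = real (card Pc) + real (card Pa)" unfolding m_def PU(1) using card_Un_disjoint[OF fP PU(2)] by simp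
    have cV: "N = real (card Vc) + real (card Va)" unfolding N_def using card_Un_disjoint[OF finc dis] un by simp
    have pos: "real (card Vc) > 0" "real (card Va) > 0" using finc ne1 ne2 by (auto simp: card_gt_0_iff)
    have e0: "1 - real (card Vc) / N = real (card Va) / N" using cV N2 by (simp add: field_simps)
    have e1: "(real (card Vc) / N) * (real (card Pc) / real (card Vc)) = real (card Pc) / N" using pos by simp
    have e2: "(real (card Va) / N) * (real (card Pa) / real (card Va)) = real (card Pa) / N" using pos by simp
    show ?thesis unfolding zc za cP e0 e1 e2 by (simp add: add_divide_distrib)
  qed
  show ?thesis unfolding cac_conditions_def Let_def N_def[symmetric] zV using c1 c2 c3 by blast
qed


lemma div_eq_nat:
  assumes "c > 0" "real a / real c = real b / real c"
  shows "a = b"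
  using assms by simp

lemma div_le_nat:
  assumes "c > 0" "real a / real c \<le> real b / real c"
  shows "a \<le> b"
  using assms by (simp add: divide_le_cancel)

lemma part2:
  assumes fin: "finite V" and n2: "card V \<ge> 2"
    and dis: "Vc \<inter> Va = {}" and un: "Vc \<union> Va = V"
    and ne1: "Vc \<noteq> {}" and ne2: "Va \<noteq> {}"
    and kk: "k \<le> card V" and kkc: "kc \<le> card Vc" and kka: "ka \<le> card Va"
    and cond: "cac_conditions V Vc Va d (real k / real (card V)) (real kc / real (card Vc)) (real ka / real (card Va))"
  shows "\<exists>x. cac_nash V Vc d x \<and> frac_plus V x = real k / real (card V) \<and>
                 frac_plus Vc x = real kc / real (card Vc) \<and> frac_plus Va x = real ka / real (card Va)"
proof -
  define N where "N = real (card V)"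
  define r where "r = cac_threshold V d"
  have N2: "N \<ge> 2" using n2 unfolding N_def by simp
  have finc: "finite Vc" "finite Va" using fin un by auto
  have pos: "card Vc > 0" "card Va > 0" using finc ne1 ne2 by (auto simp: card_gt_0_iff)
  have cV: "N = real (card Vc) + real (card Va)" unfolding N_def using card_Un_disjoint[OF finc dis] un by simp
  have C1: "\<And>ec. 0 < ec \<Longrightarrow> ec \<le> 1/N \<Longrightarrow> real kc / real (card Vc) = F_c V Vc d (N/(N-1) * (real k / N - ec))"
    using cond unfolding cac_conditions_def Let_def N_def[symmetric] by blast
  have C2: "\<And>ea. 1/N < ea \<Longrightarrow> ea \<le> 2/N \<Longrightarrow> G_a V Va d (N/(N-1) * (real k / N - ea)) \<ge> real ka / real (card Va)
      \<and> real ka / real (card Va) \<ge> G_a V Va d (N/(N-1) * (real k / N))"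
    using cond unfolding cac_conditions_def Let_def N_def[symmetric] by blast
  have C3: "real k / N = (real (card Vc) / N) * (real kc / real (card Vc)) + (1 - real (card Vc) / N) * (real ka / real (card Va))"
    using cond unfolding cac_conditions_def Let_def N_def[symmetric] by blast
  have ksum: "k = kc + ka"
  proof -
    have e0: "1 - real (card Vc) / N = real (card Va) / N" using cV N2 by (simp add: field_simps)
    have e1: "(real (card Vc) / N) * (real kc / real (card Vc)) = real kc / N" using pos by simp
    have e2: "(real (card Va) / N) * (real ka / real (card Va)) = real ka / N" using pos by simp
    have "real k / N = (real kc + real ka) / N" using C3 unfolding e0 e1 e2 by (simp add: add_divide_distrib)
    then have "real k = real kc + real ka" using N2 by simp
    then show ?thesis by linarith
  qed
  define Ac where "Ac = {i\<in>Vc. (N - 1) * r i \<le> real k - 1}"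
  have cAc: "card Ac = kc"
  proof -
    define t where "t = N/(N-1) * (real k / N - 1/N)"
    have tt: "(N - 1) * t = real k - 1" unfolding t_def using scale_eq[OF N2] N2 by simp
    have "{i\<in>Vc. r i \<le> t} = Ac"
    proof (intro set_eqI)
      fix i show "i \<in> {i\<in>Vc. r i \<le> t} \<longleftrightarrow> i \<in> Ac"
        using le_scale[OF N2, of "r i" t] tt unfolding Ac_def by auto
    qed
    moreover have "real kc / real (card Vc) = F_c V Vc d t" unfolding t_def using C1[of "1/N"] N2 by simp
    ultimately have "real kc / real (card Vc) = real (card Ac) / real (card Vc)"
      unfolding F_c_def r_def by simp
    then show ?thesis using div_eq_nat[OF pos(1)] by metis
  qed
  have gap: "\<And>i. i \<in> Vc \<Longrightarrow> i \<notin> Ac \<Longrightarrow> real k \<le> (N - 1) * r i"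
  proof (rule ccontr)
    fix i assume i: "i \<in> Vc" "i \<notin> Ac" and nle: "\<not> real k \<le> (N - 1) * r i"
    have lo: "real k - 1 < (N - 1) * r i" using i unfolding Ac_def by auto
    define ec where "ec = (real k - (N - 1) * r i) / N"
    have a1: "0 < real k - (N - 1) * r i" "real k - (N - 1) * r i \<le> 1" using nle lo by linarith+
    have ec: "0 < ec" "ec \<le> 1/N" unfolding ec_def using a1 N2 by (auto intro: divide_right_mono)
    define t where "t = N/(N-1) * (real k / N - ec)"
    have tt: "(N - 1) * t = (N - 1) * r i" unfolding t_def scale_eq[OF N2] unfolding ec_def using N2 by simp
    define Bs where "Bs = {i\<in>Vc. r i \<le> t}"
    have "real kc / real (card Vc) = F_c V Vc d t" unfolding t_def using C1 ec by simp
    then have "real (card Bs) / real (card Vc) = real (card Ac) / real (card Vc)"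
      unfolding F_c_def r_def Bs_def cAc by auto
    then have cB: "card Bs = card Ac" using div_eq_nat[OF pos(1)] by metis
    have sub: "Ac \<subseteq> Bs"
    proof
      fix j assume "j \<in> Ac"
      then have "j \<in> Vc" "(N - 1) * r j \<le> (N - 1) * t" unfolding Ac_def using tt lo by auto
      then show "j \<in> Bs" unfolding Bs_def using le_scale[OF N2, of "r j" t] by auto
    qed
    have "i \<in> Bs" unfolding Bs_def using i tt le_scale[OF N2, of "r i" t] by auto
    then have "Ac \<subset> Bs" using sub i by auto
    moreover have "finite Bs" unfolding Bs_def using finc by auto
    ultimately have "card Ac < card Bs" by (rule psubset_card_mono[rotated])
    then show False using cB by simp
  qed
  define H where "H = {i\<in>Va. (N - 1) * r i > real k}"
  define L where "L = {i\<in>Va. (N - 1) * r i \<ge> real k - 1}"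
  have finHL: "finite H" "finite L" unfolding H_def L_def using finc by auto
  have HL: "H \<subseteq> L" unfolding H_def L_def by auto
  have cH: "card H \<le> ka"
  proof -
    define t where "t = N/(N-1) * (real k / N)"
    have tt: "(N - 1) * t = real k" unfolding t_def using scale_eq[OF N2, of "real k" 0] by simp
    have "{i\<in>Va. r i > t} = H"
    proof (intro set_eqI)
      fix i show "i \<in> {i\<in>Va. r i > t} \<longleftrightarrow> i \<in> H"
        using lt_scale[OF N2, of t "r i"] tt unfolding H_def by auto
    qed
    moreover have "G_a V Va d t \<le> real ka / real (card Va)" unfolding t_def using C2[of "2/N"] N2 by (auto simp: field_simps)
    ultimately have "real (card H) / real (card Va) \<le> real ka / real (card Va)"
      unfolding G_a_def r_def by simp
    then show ?thesis using div_le_nat[OF pos(2)] by metis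
  qed
  have cL: "ka \<le> card L"
  proof -
    define D where "D = {i\<in>Va. (N - 1) * r i < real k - 1}"
    have finD: "finite D" unfolding D_def using finc by auto
    define u where "u = (if D = {} then real k - 2 else max (real k - 2) (Max ((\<lambda>i. (N - 1) * r i) ` D)))"
    have u1: "real k - 2 \<le> u" unfolding u_def by auto
    have uD: "\<And>i. i \<in> D \<Longrightarrow> (N - 1) * r i \<le> u"
    proof -
      fix i assume "i \<in> D"
      then have "(N - 1) * r i \<le> Max ((\<lambda>i. (N - 1) * r i) ` D)" using finD by (intro Max_ge) auto
      then show "(N - 1) * r i \<le> u" unfolding u_def using \<open>i \<in> D\<close> by auto
    qed
    have u2: "u < real k - 1"
    proof (cases "D = {}")
      case True then show ?thesis unfolding u_def by simp
    next
      case False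
      have "Max ((\<lambda>i. (N - 1) * r i) ` D) \<in> (\<lambda>i. (N - 1) * r i) ` D" using finD False by (intro Max_in) auto
      then have "Max ((\<lambda>i. (N - 1) * r i) ` D) < real k - 1" unfolding D_def by auto
      then show ?thesis unfolding u_def using False by simp
    qed
    define ea where "ea = (real k - u) / N"
    have a1: "1 < real k - u" "real k - u \<le> 2" using u1 u2 by linarith+
    have ea: "1/N < ea" "ea \<le> 2/N" unfolding ea_def using a1 N2 by (auto intro: divide_right_mono divide_strict_right_mono)
    define t where "t = N/(N-1) * (real k / N - ea)"
    have tt: "(N - 1) * t = u" unfolding t_def scale_eq[OF N2] unfolding ea_def using N2 by simp
    have "real ka / real (card Va) \<le> G_a V Va d t" unfolding t_def using C2 ea by blast
    then have "real ka / real (card Va) \<le> real (card {i\<in>Va. r i > t}) / real (card Va)"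
      unfolding G_a_def r_def by simp
    then have "ka \<le> card {i\<in>Va. r i > t}" using div_le_nat[OF pos(2)] by metis
    also have "card {i\<in>Va. r i > t} \<le> card L"
    proof (intro card_mono finHL subsetI)
      fix i assume "i \<in> {i\<in>Va. r i > t}"
      then have i: "i \<in> Va" "u < (N - 1) * r i" using lt_scale[OF N2, of t "r i"] tt by auto
      have "i \<notin> D" using uD i by force
      then show "i \<in> L" unfolding L_def D_def using i by auto
    qed
    finally show ?thesis .
  qed
  have "ka - card H \<le> card (L - H)" using cL finHL HL by (simp add: card_Diff_subset)
  then obtain T where T: "T \<subseteq> L - H" "card T = ka - card H" "finite T"
    by (rule obtain_subset_with_card_n)
  define B where "B = H \<union> T"
  have BL: "H \<subseteq> B" "B \<subseteq> L" unfolding B_def using T HL by auto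
  have cB: "card B = ka" unfolding B_def using card_Un_disjoint[of H T] finHL T cH by auto
  define x :: "'a \<Rightarrow> real" where "x = (\<lambda>i. if i \<in> V then (if i \<in> Ac \<union> B then 1 else -1) else undefined)"
  have AcV: "Ac \<subseteq> Vc" "B \<subseteq> Va" unfolding Ac_def using BL unfolding L_def by auto
  have xc: "x \<in> cac_config V" unfolding cac_config_def x_def by (auto simp: PiE_def extensional_def)
  have P: "{j\<in>V. x j = 1} = Ac \<union> B" unfolding x_def using AcV un by auto
  have Pc: "{j\<in>Vc. x j = 1} = Ac" unfolding x_def using AcV un dis by auto
  have Pa: "{j\<in>Va. x j = 1} = B" unfolding x_def using AcV un dis by auto
  have finAB: "finite Ac" "finite B" using AcV finc by (auto intro: finite_subset)
  have cP: "card {j\<in>V. x j = 1} = k" unfolding P using card_Un_disjoint[OF finAB] AcV dis cAc cB ksum by auto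
  have nash: "cac_nash V Vc d x"
    unfolding nash_char[OF fin n2 xc] cP N_def[symmetric] r_def[symmetric]
  proof (intro ballI conjI impI)
    fix i assume "i \<in> V" "i \<in> Vc \<and> x i = 1"
    then have "i \<in> Ac \<union> B" "i \<in> Vc" unfolding x_def by (auto split: if_splits)
    then have "i \<in> Ac" using AcV dis by auto
    then show "(N - 1) * r i \<le> real k - 1" unfolding Ac_def by auto
  next
    fix i assume "i \<in> V" "i \<in> Vc \<and> x i = -1"
    then have "i \<notin> Ac" unfolding x_def by auto
    then show "real k \<le> (N - 1) * r i" using gap \<open>i \<in> Vc \<and> x i = -1\<close> by auto
  next
    fix i assume "i \<in> V" "i \<notin> Vc \<and> x i = 1"
    then have "i \<in> B" "i \<notin> Ac" unfolding x_def using AcV by (auto split: if_splits)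
    then show "real k - 1 \<le> (N - 1) * r i" using BL unfolding L_def by auto
  next
    fix i assume i: "i \<in> V" "i \<notin> Vc \<and> x i = -1"
    then have "i \<notin> B" "i \<in> Va" unfolding x_def using un by auto
    then have "i \<notin> H" using BL by auto
    then show "(N - 1) * r i \<le> real k" unfolding H_def using \<open>i \<in> Va\<close> by auto
  qed
  show ?thesis
  proof (intro exI conjI)
    show "cac_nash V Vc d x" by (rule nash)
    show "frac_plus V x = real k / real (card V)" unfolding frac_plus_def cP ..
    show "frac_plus Vc x = real kc / real (card Vc)" unfolding frac_plus_def Pc cAc ..
    show "frac_plus Va x = real ka / real (card Va)" unfolding frac_plus_def Pa cB ..
  qed
qed

theorem theorem1:
  fixes V Vc Va :: "'a set" and d :: "'a \<Rightarrow> real"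
  assumes "finite V" and "card V \<ge> 2"
    and "Vc \<inter> Va = {}" and "Vc \<union> Va = V"
    and "Vc \<noteq> {}" and "Va \<noteq> {}"
  shows "(\<forall>x. cac_nash V Vc d x \<longrightarrow>
            cac_conditions V Vc Va d (frac_plus V x) (frac_plus Vc x) (frac_plus Va x))
       \<and> (\<forall>z zc za.
            z \<in> {real k / real (card V) | k. k \<le> card V} \<and>
            zc \<in> {real k / real (card Vc) | k. k \<le> card Vc} \<and>
            za \<in> {real k / real (card Va) | k. k \<le> card Va} \<and>
            cac_conditions V Vc Va d z zc za \<longrightarrow>
            (\<exists>x. cac_nash V Vc d x \<and> frac_plus V x = z \<and>
                 frac_plus Vc x = zc \<and> frac_plus Va x = za))"
proof (intro conjI allI impI)
  fix x assume "cac_nash V Vc d x"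
  then show "cac_conditions V Vc Va d (frac_plus V x) (frac_plus Vc x) (frac_plus Va x)"
    using part1 assms by blast
next
  fix z zc za
  assume h: "z \<in> {real k / real (card V) | k. k \<le> card V} \<and>
            zc \<in> {real k / real (card Vc) | k. k \<le> card Vc} \<and>
            za \<in> {real k / real (card Va) | k. k \<le> card Va} \<and>
            cac_conditions V Vc Va d z zc za"
  then obtain k kc ka where k: "z = real k / real (card V)" "k \<le> card V"
    and kc: "zc = real kc / real (card Vc)" "kc \<le> card Vc"
    and ka: "za = real ka / real (card Va)" "ka \<le> card Va" by blast
  show "\<exists>x. cac_nash V Vc d x \<and> frac_plus V x = z \<and> frac_plus Vc x = zc \<and> frac_plus Va x = za"
    unfolding k kc ka using part2[OF assms k(2) kc(2) ka(2)] h unfolding k kc ka by blast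
qed

end
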